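(* Under the curve flow $\gamma_t=k_1\gamma''+k_2\gamma'-\big(k_2'+\tfrac13(k_1''+2k_1^2)\big)\gamma$, one has \[ (k_2)_t=D\Big(\tfrac23k_1^{(4)}+k_2'''-2k_1k_1''-(k_1')^2-2k_1k_2'+\tfrac49k_1^3+2k_2^2\Big), \] so $\int k_2\,\mathrm{d}x$ is conserved.
   Context: $\gamma(x,t)$ is a family of nondegenerate curves in centroaffine $\mathbb R^3$ parametrized by centroaffine arclength $x$ ($\det(\gamma,\gamma',\gamma'')=1$), with invariants $k_1,k_2$ defined by $\gamma'''=(k_1\gamma)'+k_2\gamma$; $D=\partial/\partial x$. *)

theory Defs
  imports "HOL-Analysis.Analysis"
begin

text \<open>Partial derivatives of a two-parameter family f x t
  (x = centroaffine arclength, t = time).\<close>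

definition Dx :: "(real \<Rightarrow> real \<Rightarrow> 'a::real_normed_vector) \<Rightarrow> real \<Rightarrow> real \<Rightarrow> 'a" where
  "Dx f x t = vector_derivative (\<lambda>s. f s t) (at x)"

definition Dt :: "(real \<Rightarrow> real \<Rightarrow> 'a::real_normed_vector) \<Rightarrow> real \<Rightarrow> real \<Rightarrow> 'a" where
  "Dt f x t = vector_derivative (\<lambda>s. f x s) (at t)"

fun pderivs :: "bool list \<Rightarrow> (real \<Rightarrow> real \<Rightarrow> 'a::real_normed_vector) \<Rightarrow> real \<Rightarrow> real \<Rightarrow> 'a" where
  "pderivs [] f = f"
| "pderivs (True # ws) f = Dx (pderivs ws f)"
| "pderivs (False # ws) f = Dt (pderivs ws f)"

definition smooth2 :: "real set \<Rightarrow> (real \<Rightarrow> real \<Rightarrow> 'a::real_normed_vector) \<Rightarrow> bool" where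
  "smooth2 T f \<longleftrightarrow> (\<forall>ws x t. t \<in> T \<longrightarrow>
       (\<lambda>p. pderivs ws f (fst p) (snd p)) differentiable (at (x, t)))"

end

theory Submission
  imports Defs
begin

lemma pderivs_append: "pderivs ws (pderivs vs f) = pderivs (ws @ vs) f"
proof (induction ws)
  case Nil then show ?case by simp
next
  case (Cons a ws) then show ?case by (cases a) auto
qed

lemma smooth2_Dx:
  assumes "smooth2 T f" shows "smooth2 T (Dx f)"
  unfolding smooth2_def
proof (intro allI impI)
  fix ws x t assume t: "t \<in> T"
  have e: "pderivs ws (Dx f) = pderivs (ws @ [True]) f" using pderivs_append[of ws "[True]" f] by simp
  show "(\<lambda>p. pderivs ws (Dx f) (fst p) (snd p)) differentiable at (x, t)"
    unfolding e using assms t unfolding smooth2_def by blast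
qed

lemma smooth2_Dt:
  assumes "smooth2 T f" shows "smooth2 T (Dt f)"
  unfolding smooth2_def
proof (intro allI impI)
  fix ws x t assume t: "t \<in> T"
  have e: "pderivs ws (Dt f) = pderivs (ws @ [False]) f" using pderivs_append[of ws "[False]" f] by simp
  show "(\<lambda>p. pderivs ws (Dt f) (fst p) (snd p)) differentiable at (x, t)"
    unfolding e using assms t unfolding smooth2_def by blast
qed

lemma smooth2_diff:
  assumes "smooth2 T f" "t \<in> T" shows "(\<lambda>p. f (fst p) (snd p)) differentiable (at (x, t))"
proof -
  have "(\<lambda>p. pderivs [] f (fst p) (snd p)) differentiable (at (x, t))"
    using assms unfolding smooth2_def by blast
  then show ?thesis by simp
qed

lemma smooth2_cont: "smooth2 T f \<Longrightarrow> t \<in> T \<Longrightarrow> isCont (\<lambda>p. f (fst p) (snd p)) (x, t)"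
  using smooth2_diff differentiable_imp_continuous_within by blast

lemma hasDx:
  assumes "smooth2 T f" "t \<in> T"
  shows "((\<lambda>s. f s t) has_vector_derivative Dx f x t) (at x)"
proof -
  have d1: "(\<lambda>s. (s, t)) differentiable (at x)"
    by (intro derivative_intros)
  have "((\<lambda>p. f (fst p) (snd p)) \<circ> (\<lambda>s. (s, t))) differentiable (at x)"
    by (rule differentiable_chain_at[OF d1]) (simp add: smooth2_diff[OF assms])
  then have "(\<lambda>s. f s t) differentiable (at x)" by (simp add: o_def)
  then show ?thesis unfolding Dx_def using vector_derivative_works by blast
qed

lemma hasDt:
  assumes "smooth2 T f" "t \<in> T"
  shows "((\<lambda>s. f x s) has_vector_derivative Dt f x t) (at t)"
proof -
  have d1: "(\<lambda>s. (x, s)) differentiable (at t)"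
    by (intro derivative_intros)
  have "((\<lambda>p. f (fst p) (snd p)) \<circ> (\<lambda>s. (x, s))) differentiable (at t)"
    by (rule differentiable_chain_at[OF d1]) (simp add: smooth2_diff[OF assms])
  then have "(\<lambda>s. f x s) differentiable (at t)" by (simp add: o_def)
  then show ?thesis unfolding Dt_def using vector_derivative_works by blast
qed

lemma contx:
  fixes f :: "real \<Rightarrow> real \<Rightarrow> 'a::real_normed_vector"
  assumes "smooth2 T f" "t \<in> T"
  shows "continuous_on S (\<lambda>s. f s t)"
  by (rule continuous_at_imp_continuous_on) (use hasDx[OF assms] has_vector_derivative_continuous in blast)

lemma cont_swap:
  fixes f :: "real \<Rightarrow> real \<Rightarrow> 'a::real_normed_vector"
  assumes "smooth2 T f" "A \<subseteq> T"
  shows "continuous_on (A \<times> B) (\<lambda>(t, u). f u t)"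
proof (intro continuous_at_imp_continuous_on ballI)
  fix q assume q: "q \<in> A \<times> B"
  have "fst q \<in> T" using q assms(2) by auto
  from smooth2_cont[OF assms(1) this, of "snd q"]
  have "isCont (\<lambda>p. f (fst p) (snd p)) ((\<lambda>q. (snd q, fst q)) q)" by simp
  moreover have "isCont (\<lambda>q. (snd q, fst q)) q" by (intro continuous_intros)
  ultimately have "isCont ((\<lambda>p. f (fst p) (snd p)) \<circ> (\<lambda>q. (snd q, fst q))) q"
    using continuous_at_compose by blast
  then show "isCont (\<lambda>(t, u). f u t) q" by (simp add: o_def case_prod_beta')
qed

lemma mixed:
  fixes g :: "real \<Rightarrow> real \<Rightarrow> 'a::banach"
  assumes T: "open T" "is_interval T" and sg: "smooth2 T g" and t0: "t0 \<in> T"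
  shows "Dt (Dx g) x0 t0 = Dx (Dt g) x0 t0"
proof -
  define h where "h = Dx g"
  have sh: "smooth2 T h" unfolding h_def using smooth2_Dx[OF sg] .
  have sth: "smooth2 T (Dt h)" using smooth2_Dt[OF sh] .
  define c where "c = x0 - 1"
  define b where "b = x0 + 1"
  have cvT: "convex T" using T(2) is_interval_convex by blast
  have step1: "g s t = g c t + integral {c..s} (\<lambda>u. h u t)" if "t \<in> T" "c \<le> s" for s t
  proof -
    have "((\<lambda>u. h u t) has_integral (g s t - g c t)) {c..s}"
    proof (rule fundamental_theorem_of_calculus)
      show "c \<le> s" using that by simp
      fix x assume "x \<in> {c..s}"
      show "((\<lambda>u. g u t) has_vector_derivative h x t) (at x within {c..s})"
        unfolding h_def by (rule has_vector_derivative_at_within[OF hasDx[OF sg that(1)]])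
    qed
    then show ?thesis by (simp add: integral_unique)
  qed
  have step2: "Dt g s t0 = Dt g c t0 + integral {c..s} (\<lambda>u. Dt h u t0)" if "c \<le> s" for s
  proof -
    have L: "((\<lambda>t. integral (cbox c s) (\<lambda>u. h u t)) has_vector_derivative
               integral (cbox c s) (\<lambda>u. Dt h u t0)) (at t0 within T)"
    proof (rule leibniz_rule_vector_derivative[where f="\<lambda>t u. h u t" and fx="\<lambda>t u. Dt h u t"])
      show "((\<lambda>x. h t x) has_vector_derivative Dt h t x) (at x within T)" if "x \<in> T" "t \<in> cbox c s" for x t
        using hasDt[OF sh that(1)] by (rule has_vector_derivative_at_within)
      show "(\<lambda>u. h u x) integrable_on cbox c s" if "x \<in> T" for x
        unfolding cbox_interval by (intro integrable_continuous_interval contx[OF sh that])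
      show "continuous_on (T \<times> cbox c s) (\<lambda>(x, t). Dt h t x)"
        by (rule cont_swap[OF sth]) simp
      show "t0 \<in> T" by (rule t0)
      show "convex T" by (rule cvT)
    qed
    have L2: "((\<lambda>t. g c t + integral {c..s} (\<lambda>u. h u t)) has_vector_derivative
               Dt g c t0 + integral {c..s} (\<lambda>u. Dt h u t0)) (at t0)"
      using has_vector_derivative_add[OF hasDt[OF sg t0, of c] L[unfolded cbox_interval, unfolded has_vector_derivative_within_open[OF t0 T(1)]]] .
    have "((\<lambda>t. g s t) has_vector_derivative Dt g c t0 + integral {c..s} (\<lambda>u. Dt h u t0)) (at t0)"
    proof (rule has_vector_derivative_transform_within_open[OF L2 T(1) t0])
      fix y assume "y \<in> T"
      show "g c y + integral {c..s} (\<lambda>u. h u y) = g s y" using step1[OF \<open>y \<in> T\<close> that] by simp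
    qed
    then show ?thesis unfolding Dt_def by (rule vector_derivative_at)
  qed
  have I: "((\<lambda>s. integral {c..s} (\<lambda>u. Dt h u t0)) has_vector_derivative Dt h x0 t0) (at x0 within {c..b})"
    by (rule integral_has_vector_derivative[OF contx[OF sth t0]]) (auto simp: c_def b_def)
  have I2: "((\<lambda>s. integral {c..s} (\<lambda>u. Dt h u t0)) has_vector_derivative Dt h x0 t0) (at x0)"
  proof -
    have s: "{c<..<b} \<subseteq> {c..b}" by auto
    have x: "x0 \<in> {c<..<b}" by (simp add: c_def b_def)
    show ?thesis
      using has_vector_derivative_within_subset[OF I s]
      unfolding has_vector_derivative_within_open[OF x open_greaterThanLessThan] .
  qed
  have I3: "((\<lambda>s. Dt g c t0 + integral {c..s} (\<lambda>u. Dt h u t0)) has_vector_derivative Dt h x0 t0) (at x0)"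
    using has_vector_derivative_add[OF has_vector_derivative_const I2] by simp
  have "((\<lambda>s. Dt g s t0) has_vector_derivative Dt h x0 t0) (at x0)"
  proof (rule has_vector_derivative_transform_within_open[OF I3, of "{c<..}"])
    show "open {c<..}" by simp
    show "x0 \<in> {c<..}" by (simp add: c_def)
    fix y assume "y \<in> {c<..}"
    then have "c \<le> y" by simp
    show "Dt g c t0 + integral {c..y} (\<lambda>u. Dt h u t0) = Dt g y t0"
      using step2[OF \<open>c \<le> y\<close>] by simp
  qed
  then have "Dx (Dt g) x0 t0 = Dt h x0 t0" unfolding Dx_def by (rule vector_derivative_at)
  then show ?thesis by (simp add: h_def)
qed

lemma indep3:
  fixes u v w :: "real ^ 3"
  assumes "det (vector [u, v, w] :: real ^ 3 ^ 3) = 1"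
    and "a *\<^sub>R u + b *\<^sub>R v + c *\<^sub>R w = a' *\<^sub>R u + b' *\<^sub>R v + c' *\<^sub>R w"
  shows "a = a' \<and> b = b' \<and> c = c'"
proof -
  have e: "(a - a') * u$i + (b - b') * v$i + (c - c') * w$i = 0" for i
    using arg_cong[OF assms(2), of "\<lambda>z. z $ i"] by (simp add: algebra_simps)
  have D: "u$1 * v$2 * w$3 + u$2 * v$3 * w$1 + u$3 * v$1 * w$2
         - u$1 * v$3 * w$2 - u$2 * v$1 * w$3 - u$3 * v$2 * w$1 = 1"
    using assms(1) by (simp add: det_3 algebra_simps)
  define A where "A = a - a'"
  define B where "B = b - b'"
  define C where "C = c - c'"
  have e1: "A * u$1 + B * v$1 + C * w$1 = 0" and e2: "A * u$2 + B * v$2 + C * w$2 = 0"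
    and e3: "A * u$3 + B * v$3 + C * w$3 = 0" using e unfolding A_def B_def C_def by auto
  have cA: "A * (u$1 * v$2 * w$3 + u$2 * v$3 * w$1 + u$3 * v$1 * w$2
         - u$1 * v$3 * w$2 - u$2 * v$1 * w$3 - u$3 * v$2 * w$1)
     = (A * u$1 + B * v$1 + C * w$1) * (v$2 * w$3 - v$3 * w$2)
     + (A * u$2 + B * v$2 + C * w$2) * (v$3 * w$1 - v$1 * w$3)
     + (A * u$3 + B * v$3 + C * w$3) * (v$1 * w$2 - v$2 * w$1)"
    by (simp add: algebra_simps)
  have cB: "B * (u$1 * v$2 * w$3 + u$2 * v$3 * w$1 + u$3 * v$1 * w$2
         - u$1 * v$3 * w$2 - u$2 * v$1 * w$3 - u$3 * v$2 * w$1)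
     = (A * u$1 + B * v$1 + C * w$1) * (w$2 * u$3 - w$3 * u$2)
     + (A * u$2 + B * v$2 + C * w$2) * (w$3 * u$1 - w$1 * u$3)
     + (A * u$3 + B * v$3 + C * w$3) * (w$1 * u$2 - w$2 * u$1)"
    by (simp add: algebra_simps)
  have cC: "C * (u$1 * v$2 * w$3 + u$2 * v$3 * w$1 + u$3 * v$1 * w$2
         - u$1 * v$3 * w$2 - u$2 * v$1 * w$3 - u$3 * v$2 * w$1)
     = (A * u$1 + B * v$1 + C * w$1) * (u$2 * v$3 - u$3 * v$2)
     + (A * u$2 + B * v$2 + C * w$2) * (u$3 * v$1 - u$1 * v$3)
     + (A * u$3 + B * v$3 + C * w$3) * (u$1 * v$2 - u$2 * v$1)"
    by (simp add: algebra_simps)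
  have "A = 0" using cA e1 e2 e3 D by simp
  moreover have "B = 0" using cB e1 e2 e3 D by simp
  moreover have "C = 0" using cC e1 e2 e3 D by simp
  ultimately show ?thesis unfolding A_def B_def C_def by simp
qed



lemma Dx_cong: "(\<And>s. f s t = g s t) \<Longrightarrow> Dx f x t = Dx g x t"
  by (simp add: Dx_def)

lemma frame:
  fixes g0 g1 g2 :: "real \<Rightarrow> 'a::real_normed_vector"
  assumes d0: "\<And>x. (g0 has_vector_derivative g1 x) (at x)"
    and d1: "\<And>x. (g1 has_vector_derivative g2 x) (at x)"
    and d2: "\<And>x. (g2 has_vector_derivative (P x *\<^sub>R g0 x + Q x *\<^sub>R g1 x)) (at x)"
    and da: "(\<alpha> has_real_derivative \<alpha>') (at x)"
    and db: "(\<beta> has_real_derivative \<beta>') (at x)"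
    and dd: "(\<delta> has_real_derivative \<delta>') (at x)"
    and ea: "a1 = \<alpha>' + \<delta> x * P x" and eb: "b1 = \<beta>' + \<alpha> x + \<delta> x * Q x"
    and ed: "d1 = \<delta>' + \<beta> x"
  shows "((\<lambda>x. \<alpha> x *\<^sub>R g0 x + \<beta> x *\<^sub>R g1 x + \<delta> x *\<^sub>R g2 x) has_vector_derivative
          (a1 *\<^sub>R g0 x + b1 *\<^sub>R g1 x + d1 *\<^sub>R g2 x)) (at x)"
  apply (rule has_vector_derivative_eq_rhs[OF has_vector_derivative_add[OF has_vector_derivative_add[OF
       has_vector_derivative_scaleR[OF da d0] has_vector_derivative_scaleR[OF db d1]]
       has_vector_derivative_scaleR[OF dd d2]]])
  apply (simp add: ea eb ed algebra_simps)
  done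

lemma lincomb:
  fixes g0 g1 g2 :: "'a::real_vector"
  shows "p *\<^sub>R g0 + r *\<^sub>R (c *\<^sub>R g0 + b *\<^sub>R g1 + d *\<^sub>R g2)
    + (k *\<^sub>R g1 + m *\<^sub>R (a1 *\<^sub>R g0 + b1 *\<^sub>R g1 + d1 *\<^sub>R g2))
    = (p + r * c + m * a1) *\<^sub>R g0 + (k + r * b + m * b1) *\<^sub>R g1 + (r * d + m * d1) *\<^sub>R g2"
  by (simp add: algebra_simps)

lemma part1:
  fixes \<gamma> :: "real \<Rightarrow> real \<Rightarrow> real ^ 3"
    and k1 k2 :: "real \<Rightarrow> real \<Rightarrow> real"
    and T :: "real set"
  assumes T: "open T" "is_interval T"
    and sg: "smooth2 T \<gamma>" and sk1: "smooth2 T k1" and sk2: "smooth2 T k2"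
    and arclength: "\<And>x t. t \<in> T \<Longrightarrow>
        det (vector [\<gamma> x t, Dx \<gamma> x t, Dx (Dx \<gamma>) x t] :: real ^ 3 ^ 3) = 1"
    and g3eq: "\<And>x t. t \<in> T \<Longrightarrow>
        Dx (Dx (Dx \<gamma>)) x t = (Dx k1 x t + k2 x t) *\<^sub>R \<gamma> x t + k1 x t *\<^sub>R Dx \<gamma> x t"
    and flow: "\<And>x t. t \<in> T \<Longrightarrow>
        Dt \<gamma> x t = k1 x t *\<^sub>R Dx (Dx \<gamma>) x t + k2 x t *\<^sub>R Dx \<gamma> x t
          - (Dx k2 x t + (1/3) * (Dx (Dx k1) x t + 2 * (k1 x t)^2)) *\<^sub>R \<gamma> x t"
    and t: "t \<in> T"
  shows "Dt k2 x t = Dx (\<lambda>x t.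
                (2/3) * Dx (Dx (Dx (Dx k1))) x t + Dx (Dx (Dx k2)) x t
              - 2 * k1 x t * Dx (Dx k1) x t - (Dx k1 x t)^2
              - 2 * k1 x t * Dx k2 x t + (4/9) * (k1 x t)^3 + 2 * (k2 x t)^2) x t"
proof -
  define A where "A n s = (Dx ^^ n) k1 s t" for n s
  define B where "B n s = (Dx ^^ n) k2 s t" for n s
  have sA: "smooth2 T ((Dx ^^ n) k1)" for n by (induction n) (simp_all add: sk1 smooth2_Dx)
  have sB: "smooth2 T ((Dx ^^ n) k2)" for n by (induction n) (simp_all add: sk2 smooth2_Dx)
  have dA: "(A n has_real_derivative A (Suc n) s) (at s)" for n s
    unfolding has_real_derivative_iff_has_vector_derivative A_def
    using hasDx[OF sA t, of n s] by (simp add: A_def[abs_def])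
  have dB: "(B n has_real_derivative B (Suc n) s) (at s)" for n s
    unfolding has_real_derivative_iff_has_vector_derivative B_def
    using hasDx[OF sB t, of n s] by (simp add: B_def[abs_def])
  have Aeq: "k1 s t = A 0 s" "Dx k1 s t = A 1 s" "Dx (Dx k1) s t = A 2 s"
    "Dx (Dx (Dx k1)) s t = A 3 s" "Dx (Dx (Dx (Dx k1))) s t = A 4 s" for s
    by (simp_all add: A_def eval_nat_numeral)
  have Beq: "k2 s t = B 0 s" "Dx k2 s t = B 1 s" "Dx (Dx k2) s t = B 2 s"
    "Dx (Dx (Dx k2)) s t = B 3 s" for s
    by (simp_all add: B_def eval_nat_numeral)
  have dG0: "((\<lambda>s. \<gamma> s t) has_vector_derivative Dx \<gamma> s t) (at s)" for s
    by (rule hasDx[OF sg t])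
  have dG1: "((\<lambda>s. Dx \<gamma> s t) has_vector_derivative Dx (Dx \<gamma>) s t) (at s)" for s
    by (rule hasDx[OF smooth2_Dx[OF sg] t])
  have dG2: "((\<lambda>s. Dx (Dx \<gamma>) s t) has_vector_derivative
        (A 1 s + B 0 s) *\<^sub>R \<gamma> s t + A 0 s *\<^sub>R Dx \<gamma> s t) (at s)" for s
    using hasDx[OF smooth2_Dx[OF smooth2_Dx[OF sg]] t, of s] g3eq[OF t, of s] by (simp add: Aeq Beq)
  have flowV: "Dt \<gamma> s t = (- (1/3) * A 2 s - B 1 s - (2/3) * A 0 s * A 0 s) *\<^sub>R \<gamma> s t + (B 0 s) *\<^sub>R Dx \<gamma> s t + (A 0 s) *\<^sub>R Dx (Dx \<gamma>) s t" for s
    using flow[OF t, of s] by (simp add: Aeq Beq algebra_simps power2_eq_square)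
  have dV0: "((\<lambda>s. (- (1/3) * A 2 s - B 1 s - (2/3) * A 0 s * A 0 s) *\<^sub>R \<gamma> s t + (B 0 s) *\<^sub>R Dx \<gamma> s t + (A 0 s) *\<^sub>R Dx (Dx \<gamma>) s t) has_vector_derivative ((- (1/3) * A 3 s - B 2 s - (1/3) * A 0 s * A 1 s + A 0 s * B 0 s) *\<^sub>R \<gamma> s t + (- (1/3) * A 2 s + (1/3) * A 0 s * A 0 s) *\<^sub>R Dx \<gamma> s t + (A 1 s + B 0 s) *\<^sub>R Dx (Dx \<gamma>) s t)) (at s)" for s
  proof (rule frame[OF dG0 dG1 dG2])
    show "((\<lambda>s. (- (1/3) * A 2 s - B 1 s - (2/3) * A 0 s * A 0 s)) has_real_derivative (- (1/3) * A 3 s - B 2 s - (4/3) * A 0 s * A 1 s)) (at s)"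
      by (auto intro!: derivative_eq_intros dA dB simp: eval_nat_numeral field_simps)
    show "((\<lambda>s. (B 0 s)) has_real_derivative (B 1 s)) (at s)"
      by (auto intro!: derivative_eq_intros dA dB simp: eval_nat_numeral field_simps)
    show "((\<lambda>s. (A 0 s)) has_real_derivative (A 1 s)) (at s)"
      by (auto intro!: derivative_eq_intros dA dB simp: eval_nat_numeral field_simps)
  qed (simp_all add: field_simps)
  have dV1: "((\<lambda>s. (- (1/3) * A 3 s - B 2 s - (1/3) * A 0 s * A 1 s + A 0 s * B 0 s) *\<^sub>R \<gamma> s t + (- (1/3) * A 2 s + (1/3) * A 0 s * A 0 s) *\<^sub>R Dx \<gamma> s t + (A 1 s + B 0 s) *\<^sub>R Dx (Dx \<gamma>) s t) has_vector_derivative ((- (1/3) * A 4 s - B 3 s - (1/3) * A 0 s * A 2 s + A 0 s * B 1 s + (2/3) * A 1 s * A 1 s + 3 * A 1 s * B 0 s + B 0 s * B 0 s) *\<^sub>R \<gamma> s t + (- (2/3) * A 3 s - B 2 s + (4/3) * A 0 s * A 1 s + 2 * A 0 s * B 0 s) *\<^sub>R Dx \<gamma> s t + ((2/3) * A 2 s + B 1 s + (1/3) * A 0 s * A 0 s) *\<^sub>R Dx (Dx \<gamma>) s t)) (at s)" for s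
  proof (rule frame[OF dG0 dG1 dG2])
    show "((\<lambda>s. (- (1/3) * A 3 s - B 2 s - (1/3) * A 0 s * A 1 s + A 0 s * B 0 s)) has_real_derivative (- (1/3) * A 4 s - B 3 s - (1/3) * A 0 s * A 2 s + A 0 s * B 1 s - (1/3) * A 1 s * A 1 s + A 1 s * B 0 s)) (at s)"
      by (auto intro!: derivative_eq_intros dA dB simp: eval_nat_numeral field_simps)
    show "((\<lambda>s. (- (1/3) * A 2 s + (1/3) * A 0 s * A 0 s)) has_real_derivative (- (1/3) * A 3 s + (2/3) * A 0 s * A 1 s)) (at s)"
      by (auto intro!: derivative_eq_intros dA dB simp: eval_nat_numeral field_simps)
    show "((\<lambda>s. (A 1 s + B 0 s)) has_real_derivative (A 2 s + B 1 s)) (at s)"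
      by (auto intro!: derivative_eq_intros dA dB simp: eval_nat_numeral field_simps)
  qed (simp_all add: field_simps)
  have dV2: "((\<lambda>s. (- (1/3) * A 4 s - B 3 s - (1/3) * A 0 s * A 2 s + A 0 s * B 1 s + (2/3) * A 1 s * A 1 s + 3 * A 1 s * B 0 s + B 0 s * B 0 s) *\<^sub>R \<gamma> s t + (- (2/3) * A 3 s - B 2 s + (4/3) * A 0 s * A 1 s + 2 * A 0 s * B 0 s) *\<^sub>R Dx \<gamma> s t + ((2/3) * A 2 s + B 1 s + (1/3) * A 0 s * A 0 s) *\<^sub>R Dx (Dx \<gamma>) s t) has_vector_derivative ((- (1/3) * A 5 s - B 4 s - (1/3) * A 0 s * A 3 s + A 0 s * B 2 s + (5/3) * A 1 s * A 2 s + 5 * A 1 s * B 1 s + (11/3) * A 2 s * B 0 s + 3 * B 0 s * B 1 s + (1/3) * A 0 s * A 0 s * A 1 s + (1/3) * A 0 s * A 0 s * B 0 s) *\<^sub>R \<gamma> s t + (- A 4 s - 2 * B 3 s + (5/3) * A 0 s * A 2 s + 4 * A 0 s * B 1 s + 2 * A 1 s * A 1 s + 5 * A 1 s * B 0 s + B 0 s * B 0 s + (1/3) * A 0 s * A 0 s * A 0 s) *\<^sub>R Dx \<gamma> s t + (2 * A 0 s * A 1 s + 2 * A 0 s * B 0 s) *\<^sub>R Dx (Dx \<gamma>) s t)) (at s)" for s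
  proof (rule frame[OF dG0 dG1 dG2])
    show "((\<lambda>s. (- (1/3) * A 4 s - B 3 s - (1/3) * A 0 s * A 2 s + A 0 s * B 1 s + (2/3) * A 1 s * A 1 s + 3 * A 1 s * B 0 s + B 0 s * B 0 s)) has_real_derivative (- (1/3) * A 5 s - B 4 s - (1/3) * A 0 s * A 3 s + A 0 s * B 2 s + A 1 s * A 2 s + 4 * A 1 s * B 1 s + 3 * A 2 s * B 0 s + 2 * B 0 s * B 1 s)) (at s)"
      by (auto intro!: derivative_eq_intros dA dB simp: eval_nat_numeral field_simps)
    show "((\<lambda>s. (- (2/3) * A 3 s - B 2 s + (4/3) * A 0 s * A 1 s + 2 * A 0 s * B 0 s)) has_real_derivative (- (2/3) * A 4 s - B 3 s + (4/3) * A 0 s * A 2 s + 2 * A 0 s * B 1 s + (4/3) * A 1 s * A 1 s + 2 * A 1 s * B 0 s)) (at s)"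
      by (auto intro!: derivative_eq_intros dA dB simp: eval_nat_numeral field_simps)
    show "((\<lambda>s. ((2/3) * A 2 s + B 1 s + (1/3) * A 0 s * A 0 s)) has_real_derivative ((2/3) * A 3 s + B 2 s + (2/3) * A 0 s * A 1 s)) (at s)"
      by (auto intro!: derivative_eq_intros dA dB simp: eval_nat_numeral field_simps)
  qed (simp_all add: field_simps)
  have E1: "Dx (Dt \<gamma>) s t = (- (1/3) * A 3 s - B 2 s - (1/3) * A 0 s * A 1 s + A 0 s * B 0 s) *\<^sub>R \<gamma> s t + (- (1/3) * A 2 s + (1/3) * A 0 s * A 0 s) *\<^sub>R Dx \<gamma> s t + (A 1 s + B 0 s) *\<^sub>R Dx (Dx \<gamma>) s t" for s
  proof -
    have e: "(\<lambda>u. Dt \<gamma> u t) = (\<lambda>s. (- (1/3) * A 2 s - B 1 s - (2/3) * A 0 s * A 0 s) *\<^sub>R \<gamma> s t + (B 0 s) *\<^sub>R Dx \<gamma> s t + (A 0 s) *\<^sub>R Dx (Dx \<gamma>) s t)" using flowV by (intro ext)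
    have "Dx (Dt \<gamma>) s t = vector_derivative (\<lambda>u. Dt \<gamma> u t) (at s)" by (rule Dx_def)
    also have "\<dots> = vector_derivative (\<lambda>s. (- (1/3) * A 2 s - B 1 s - (2/3) * A 0 s * A 0 s) *\<^sub>R \<gamma> s t + (B 0 s) *\<^sub>R Dx \<gamma> s t + (A 0 s) *\<^sub>R Dx (Dx \<gamma>) s t) (at s)" by (simp only: e)
    also have "\<dots> = (- (1/3) * A 3 s - B 2 s - (1/3) * A 0 s * A 1 s + A 0 s * B 0 s) *\<^sub>R \<gamma> s t + (- (1/3) * A 2 s + (1/3) * A 0 s * A 0 s) *\<^sub>R Dx \<gamma> s t + (A 1 s + B 0 s) *\<^sub>R Dx (Dx \<gamma>) s t" by (rule vector_derivative_at[OF dV0])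
    finally show ?thesis .
  qed
  have E2: "Dx (Dx (Dt \<gamma>)) s t = (- (1/3) * A 4 s - B 3 s - (1/3) * A 0 s * A 2 s + A 0 s * B 1 s + (2/3) * A 1 s * A 1 s + 3 * A 1 s * B 0 s + B 0 s * B 0 s) *\<^sub>R \<gamma> s t + (- (2/3) * A 3 s - B 2 s + (4/3) * A 0 s * A 1 s + 2 * A 0 s * B 0 s) *\<^sub>R Dx \<gamma> s t + ((2/3) * A 2 s + B 1 s + (1/3) * A 0 s * A 0 s) *\<^sub>R Dx (Dx \<gamma>) s t" for s
  proof -
    have e: "(\<lambda>u. Dx (Dt \<gamma>) u t) = (\<lambda>s. (- (1/3) * A 3 s - B 2 s - (1/3) * A 0 s * A 1 s + A 0 s * B 0 s) *\<^sub>R \<gamma> s t + (- (1/3) * A 2 s + (1/3) * A 0 s * A 0 s) *\<^sub>R Dx \<gamma> s t + (A 1 s + B 0 s) *\<^sub>R Dx (Dx \<gamma>) s t)" using E1 by (intro ext)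
    have "Dx (Dx (Dt \<gamma>)) s t = vector_derivative (\<lambda>u. Dx (Dt \<gamma>) u t) (at s)" by (rule Dx_def)
    also have "\<dots> = vector_derivative (\<lambda>s. (- (1/3) * A 3 s - B 2 s - (1/3) * A 0 s * A 1 s + A 0 s * B 0 s) *\<^sub>R \<gamma> s t + (- (1/3) * A 2 s + (1/3) * A 0 s * A 0 s) *\<^sub>R Dx \<gamma> s t + (A 1 s + B 0 s) *\<^sub>R Dx (Dx \<gamma>) s t) (at s)" by (simp only: e)
    also have "\<dots> = (- (1/3) * A 4 s - B 3 s - (1/3) * A 0 s * A 2 s + A 0 s * B 1 s + (2/3) * A 1 s * A 1 s + 3 * A 1 s * B 0 s + B 0 s * B 0 s) *\<^sub>R \<gamma> s t + (- (2/3) * A 3 s - B 2 s + (4/3) * A 0 s * A 1 s + 2 * A 0 s * B 0 s) *\<^sub>R Dx \<gamma> s t + ((2/3) * A 2 s + B 1 s + (1/3) * A 0 s * A 0 s) *\<^sub>R Dx (Dx \<gamma>) s t" by (rule vector_derivative_at[OF dV1])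
    finally show ?thesis .
  qed
  have E3: "Dx (Dx (Dx (Dt \<gamma>))) s t = (- (1/3) * A 5 s - B 4 s - (1/3) * A 0 s * A 3 s + A 0 s * B 2 s + (5/3) * A 1 s * A 2 s + 5 * A 1 s * B 1 s + (11/3) * A 2 s * B 0 s + 3 * B 0 s * B 1 s + (1/3) * A 0 s * A 0 s * A 1 s + (1/3) * A 0 s * A 0 s * B 0 s) *\<^sub>R \<gamma> s t + (- A 4 s - 2 * B 3 s + (5/3) * A 0 s * A 2 s + 4 * A 0 s * B 1 s + 2 * A 1 s * A 1 s + 5 * A 1 s * B 0 s + B 0 s * B 0 s + (1/3) * A 0 s * A 0 s * A 0 s) *\<^sub>R Dx \<gamma> s t + (2 * A 0 s * A 1 s + 2 * A 0 s * B 0 s) *\<^sub>R Dx (Dx \<gamma>) s t" for s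
  proof -
    have e: "(\<lambda>u. Dx (Dx (Dt \<gamma>)) u t) = (\<lambda>s. (- (1/3) * A 4 s - B 3 s - (1/3) * A 0 s * A 2 s + A 0 s * B 1 s + (2/3) * A 1 s * A 1 s + 3 * A 1 s * B 0 s + B 0 s * B 0 s) *\<^sub>R \<gamma> s t + (- (2/3) * A 3 s - B 2 s + (4/3) * A 0 s * A 1 s + 2 * A 0 s * B 0 s) *\<^sub>R Dx \<gamma> s t + ((2/3) * A 2 s + B 1 s + (1/3) * A 0 s * A 0 s) *\<^sub>R Dx (Dx \<gamma>) s t)" using E2 by (intro ext)
    have "Dx (Dx (Dx (Dt \<gamma>))) s t = vector_derivative (\<lambda>u. Dx (Dx (Dt \<gamma>)) u t) (at s)" by (rule Dx_def)
    also have "\<dots> = vector_derivative (\<lambda>s. (- (1/3) * A 4 s - B 3 s - (1/3) * A 0 s * A 2 s + A 0 s * B 1 s + (2/3) * A 1 s * A 1 s + 3 * A 1 s * B 0 s + B 0 s * B 0 s) *\<^sub>R \<gamma> s t + (- (2/3) * A 3 s - B 2 s + (4/3) * A 0 s * A 1 s + 2 * A 0 s * B 0 s) *\<^sub>R Dx \<gamma> s t + ((2/3) * A 2 s + B 1 s + (1/3) * A 0 s * A 0 s) *\<^sub>R Dx (Dx \<gamma>) s t) (at s)" by (simp only: e)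
    also have "\<dots> = (- (1/3) * A 5 s - B 4 s - (1/3) * A 0 s * A 3 s + A 0 s * B 2 s + (5/3) * A 1 s * A 2 s + 5 * A 1 s * B 1 s + (11/3) * A 2 s * B 0 s + 3 * B 0 s * B 1 s + (1/3) * A 0 s * A 0 s * A 1 s + (1/3) * A 0 s * A 0 s * B 0 s) *\<^sub>R \<gamma> s t + (- A 4 s - 2 * B 3 s + (5/3) * A 0 s * A 2 s + 4 * A 0 s * B 1 s + 2 * A 1 s * A 1 s + 5 * A 1 s * B 0 s + B 0 s * B 0 s + (1/3) * A 0 s * A 0 s * A 0 s) *\<^sub>R Dx \<gamma> s t + (2 * A 0 s * A 1 s + 2 * A 0 s * B 0 s) *\<^sub>R Dx (Dx \<gamma>) s t" by (rule vector_derivative_at[OF dV2])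
    finally show ?thesis .
  qed
  have M1: "Dt (Dx \<gamma>) s t = Dx (Dt \<gamma>) s t" for s by (rule mixed[OF T sg t])
  have M2: "Dt (Dx (Dx \<gamma>)) s t = Dx (Dx (Dt \<gamma>)) s t" for s
  proof -
    have "Dt (Dx (Dx \<gamma>)) s t = Dx (Dt (Dx \<gamma>)) s t" by (rule mixed[OF T smooth2_Dx[OF sg] t])
    also have "\<dots> = Dx (Dx (Dt \<gamma>)) s t" by (rule Dx_cong) (rule M1)
    finally show ?thesis .
  qed
  have M3: "Dt (Dx (Dx (Dx \<gamma>))) s t = Dx (Dx (Dx (Dt \<gamma>))) s t" for s
  proof -
    have "Dt (Dx (Dx (Dx \<gamma>))) s t = Dx (Dt (Dx (Dx \<gamma>))) s t" by (rule mixed[OF T smooth2_Dx[OF smooth2_Dx[OF sg]] t])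
    also have "\<dots> = Dx (Dx (Dx (Dt \<gamma>))) s t" by (rule Dx_cong) (rule M2)
    finally show ?thesis .
  qed
  have key: "Dt k1 x t + (A 1 x + B 0 x) * B 0 x + A 0 x * (- (1/3) * A 2 x + (1/3) * A 0 x * A 0 x) = (- A 4 x - 2 * B 3 x + (5/3) * A 0 x * A 2 x + 4 * A 0 x * B 1 x + 2 * A 1 x * A 1 x + 5 * A 1 x * B 0 x + B 0 x * B 0 x + (1/3) * A 0 x * A 0 x * A 0 x)
     \<and> Dt (Dx k1) x t + Dt k2 x t + (A 1 x + B 0 x) * (- (1/3) * A 2 x - B 1 x - (2/3) * A 0 x * A 0 x) + A 0 x * (- (1/3) * A 3 x - B 2 x - (1/3) * A 0 x * A 1 x + A 0 x * B 0 x) = (- (1/3) * A 5 x - B 4 x - (1/3) * A 0 x * A 3 x + A 0 x * B 2 x + (5/3) * A 1 x * A 2 x + 5 * A 1 x * B 1 x + (11/3) * A 2 x * B 0 x + 3 * B 0 x * B 1 x + (1/3) * A 0 x * A 0 x * A 1 x + (1/3) * A 0 x * A 0 x * B 0 x)" for x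
  proof -
    have hk1: "((\<lambda>s. k1 x s) has_real_derivative Dt k1 x t) (at t)"
      using hasDt[OF sk1 t, of x] by (simp add: has_real_derivative_iff_has_vector_derivative)
    have hk2: "((\<lambda>s. k2 x s) has_real_derivative Dt k2 x t) (at t)"
      using hasDt[OF sk2 t, of x] by (simp add: has_real_derivative_iff_has_vector_derivative)
    have hDk1: "((\<lambda>s. Dx k1 x s) has_real_derivative Dt (Dx k1) x t) (at t)"
      using hasDt[OF smooth2_Dx[OF sk1] t, of x] by (simp add: has_real_derivative_iff_has_vector_derivative)
    have hg: "((\<lambda>s. \<gamma> x s) has_vector_derivative Dt \<gamma> x t) (at t)"
      using hasDt[OF sg t, of x] by simp
    have hg1: "((\<lambda>s. Dx \<gamma> x s) has_vector_derivative Dt (Dx \<gamma>) x t) (at t)"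
      using hasDt[OF smooth2_Dx[OF sg] t, of x] by simp
    have DT: "((\<lambda>s. (Dx k1 x s + k2 x s) *\<^sub>R \<gamma> x s + k1 x s *\<^sub>R Dx \<gamma> x s) has_vector_derivative
       ((Dt (Dx k1) x t + Dt k2 x t) *\<^sub>R \<gamma> x t + (Dx k1 x t + k2 x t) *\<^sub>R Dt \<gamma> x t
        + (Dt k1 x t *\<^sub>R Dx \<gamma> x t + k1 x t *\<^sub>R Dt (Dx \<gamma>) x t))) (at t)"
      by (rule has_vector_derivative_eq_rhs[OF has_vector_derivative_add[OF
          has_vector_derivative_scaleR[OF DERIV_add[OF hDk1 hk2] hg] has_vector_derivative_scaleR[OF hk1 hg1]]])
        (simp add: algebra_simps)
    have DT2: "((\<lambda>s. Dx (Dx (Dx \<gamma>)) x s) has_vector_derivative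
       ((Dt (Dx k1) x t + Dt k2 x t) *\<^sub>R \<gamma> x t + (Dx k1 x t + k2 x t) *\<^sub>R Dt \<gamma> x t
        + (Dt k1 x t *\<^sub>R Dx \<gamma> x t + k1 x t *\<^sub>R Dt (Dx \<gamma>) x t))) (at t)"
      by (rule has_vector_derivative_transform_within_open[OF DT T(1) t]) (simp add: g3eq)
    have L: "Dt (Dx (Dx (Dx \<gamma>))) x t =
       (Dt (Dx k1) x t + Dt k2 x t) *\<^sub>R \<gamma> x t + (Dx k1 x t + k2 x t) *\<^sub>R Dt \<gamma> x t
        + (Dt k1 x t *\<^sub>R Dx \<gamma> x t + k1 x t *\<^sub>R Dt (Dx \<gamma>) x t)"
      unfolding Dt_def[of "Dx (Dx (Dx \<gamma>))"] by (rule vector_derivative_at[OF DT2])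
    have "(- (1/3) * A 5 x - B 4 x - (1/3) * A 0 x * A 3 x + A 0 x * B 2 x + (5/3) * A 1 x * A 2 x + 5 * A 1 x * B 1 x + (11/3) * A 2 x * B 0 x + 3 * B 0 x * B 1 x + (1/3) * A 0 x * A 0 x * A 1 x + (1/3) * A 0 x * A 0 x * B 0 x) *\<^sub>R \<gamma> x t + (- A 4 x - 2 * B 3 x + (5/3) * A 0 x * A 2 x + 4 * A 0 x * B 1 x + 2 * A 1 x * A 1 x + 5 * A 1 x * B 0 x + B 0 x * B 0 x + (1/3) * A 0 x * A 0 x * A 0 x) *\<^sub>R Dx \<gamma> x t + (2 * A 0 x * A 1 x + 2 * A 0 x * B 0 x) *\<^sub>R Dx (Dx \<gamma>) x t = Dt (Dx (Dx (Dx \<gamma>))) x t" using E3[of x] M3[of x] by simp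
    also have "\<dots> = (Dt (Dx k1) x t + Dt k2 x t) *\<^sub>R \<gamma> x t + (A 1 x + B 0 x) *\<^sub>R ((- (1/3) * A 2 x - B 1 x - (2/3) * A 0 x * A 0 x) *\<^sub>R \<gamma> x t + (B 0 x) *\<^sub>R Dx \<gamma> x t + (A 0 x) *\<^sub>R Dx (Dx \<gamma>) x t)
        + (Dt k1 x t *\<^sub>R Dx \<gamma> x t + A 0 x *\<^sub>R ((- (1/3) * A 3 x - B 2 x - (1/3) * A 0 x * A 1 x + A 0 x * B 0 x) *\<^sub>R \<gamma> x t + (- (1/3) * A 2 x + (1/3) * A 0 x * A 0 x) *\<^sub>R Dx \<gamma> x t + (A 1 x + B 0 x) *\<^sub>R Dx (Dx \<gamma>) x t))"
      by (simp only: L flowV M1 E1 Aeq Beq)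
    also have "\<dots> = (Dt (Dx k1) x t + Dt k2 x t + (A 1 x + B 0 x) * (- (1/3) * A 2 x - B 1 x - (2/3) * A 0 x * A 0 x) + A 0 x * (- (1/3) * A 3 x - B 2 x - (1/3) * A 0 x * A 1 x + A 0 x * B 0 x)) *\<^sub>R \<gamma> x t
       + (Dt k1 x t + (A 1 x + B 0 x) * B 0 x + A 0 x * (- (1/3) * A 2 x + (1/3) * A 0 x * A 0 x)) *\<^sub>R Dx \<gamma> x t
       + ((A 1 x + B 0 x) * A 0 x + A 0 x * (A 1 x + B 0 x)) *\<^sub>R Dx (Dx \<gamma>) x t"
      by (rule lincomb)
    finally have "(- (1/3) * A 5 x - B 4 x - (1/3) * A 0 x * A 3 x + A 0 x * B 2 x + (5/3) * A 1 x * A 2 x + 5 * A 1 x * B 1 x + (11/3) * A 2 x * B 0 x + 3 * B 0 x * B 1 x + (1/3) * A 0 x * A 0 x * A 1 x + (1/3) * A 0 x * A 0 x * B 0 x) *\<^sub>R \<gamma> x t + (- A 4 x - 2 * B 3 x + (5/3) * A 0 x * A 2 x + 4 * A 0 x * B 1 x + 2 * A 1 x * A 1 x + 5 * A 1 x * B 0 x + B 0 x * B 0 x + (1/3) * A 0 x * A 0 x * A 0 x) *\<^sub>R Dx \<gamma> x t + (2 * A 0 x * A 1 x + 2 * A 0 x * B 0 x) *\<^sub>R Dx (Dx \<gamma>) x t = \<dots>" .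
    from indep3[OF arclength[OF t] this] show ?thesis by simp
  qed
  have K1: "Dt k1 s t = (- A 4 s - 2 * B 3 s + 2 * A 0 s * A 2 s + 4 * A 0 s * B 1 s + 2 * A 1 s * A 1 s + 4 * A 1 s * B 0 s)" for s
  proof -
    have "Dt k1 s t = (- A 4 s - 2 * B 3 s + (5/3) * A 0 s * A 2 s + 4 * A 0 s * B 1 s + 2 * A 1 s * A 1 s + 5 * A 1 s * B 0 s + B 0 s * B 0 s + (1/3) * A 0 s * A 0 s * A 0 s) - (A 1 s + B 0 s) * B 0 s - A 0 s * (- (1/3) * A 2 s + (1/3) * A 0 s * A 0 s)" using key[of s] by linarith
    then show ?thesis by (simp add: field_simps)
  qed
  have DK1: "Dx (Dt k1) x t = (- A 5 x - 2 * B 4 x + 2 * A 0 x * A 3 x + 4 * A 0 x * B 2 x + 6 * A 1 x * A 2 x + 8 * A 1 x * B 1 x + 4 * A 2 x * B 0 x)"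
  proof -
    have e: "(\<lambda>u. Dt k1 u t) = (\<lambda>s. (- A 4 s - 2 * B 3 s + 2 * A 0 s * A 2 s + 4 * A 0 s * B 1 s + 2 * A 1 s * A 1 s + 4 * A 1 s * B 0 s))" using K1 by (intro ext)
    have "Dx (Dt k1) x t = vector_derivative (\<lambda>u. Dt k1 u t) (at x)" by (rule Dx_def)
    also have "\<dots> = vector_derivative (\<lambda>s. (- A 4 s - 2 * B 3 s + 2 * A 0 s * A 2 s + 4 * A 0 s * B 1 s + 2 * A 1 s * A 1 s + 4 * A 1 s * B 0 s)) (at x)" by (simp only: e)
    also have "\<dots> = (- A 5 x - 2 * B 4 x + 2 * A 0 x * A 3 x + 4 * A 0 x * B 2 x + 6 * A 1 x * A 2 x + 8 * A 1 x * B 1 x + 4 * A 2 x * B 0 x)"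
    proof (rule vector_derivative_at)
      show "((\<lambda>s. (- A 4 s - 2 * B 3 s + 2 * A 0 s * A 2 s + 4 * A 0 s * B 1 s + 2 * A 1 s * A 1 s + 4 * A 1 s * B 0 s)) has_vector_derivative (- A 5 x - 2 * B 4 x + 2 * A 0 x * A 3 x + 4 * A 0 x * B 2 x + 6 * A 1 x * A 2 x + 8 * A 1 x * B 1 x + 4 * A 2 x * B 0 x)) (at x)"
        unfolding has_real_derivative_iff_has_vector_derivative[symmetric]
        by (auto intro!: derivative_eq_intros dA dB simp: eval_nat_numeral field_simps)
    qed
    finally show ?thesis .
  qed
  have MK: "Dt (Dx k1) x t = Dx (Dt k1) x t" by (rule mixed[OF T sk1 t])
  have RHS: "Dx (\<lambda>x t.
                (2/3) * Dx (Dx (Dx (Dx k1))) x t + Dx (Dx (Dx k2)) x t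
              - 2 * k1 x t * Dx (Dx k1) x t - (Dx k1 x t)^2
              - 2 * k1 x t * Dx k2 x t + (4/9) * (k1 x t)^3 + 2 * (k2 x t)^2) x t = ((2/3) * A 5 x + B 4 x - 2 * A 0 x * A 3 x - 2 * A 0 x * B 2 x - 4 * A 1 x * A 2 x - 2 * A 1 x * B 1 x + 4 * B 0 x * B 1 x + (4/3) * A 0 x * A 0 x * A 1 x)"
  proof -
    have e: "(\<lambda>s. (2/3) * Dx (Dx (Dx (Dx k1))) s t + Dx (Dx (Dx k2)) s t
              - 2 * k1 s t * Dx (Dx k1) s t - (Dx k1 s t)^2
              - 2 * k1 s t * Dx k2 s t + (4/9) * (k1 s t)^3 + 2 * (k2 s t)^2) = (\<lambda>s. ((2/3) * A 4 s + B 3 s - 2 * A 0 s * A 2 s - 2 * A 0 s * B 1 s - A 1 s * A 1 s + 2 * B 0 s * B 0 s + (4/9) * A 0 s * A 0 s * A 0 s))"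
      by (intro ext) (simp add: Aeq Beq power2_eq_square power3_eq_cube field_simps)
    have "Dx (\<lambda>x t.
                (2/3) * Dx (Dx (Dx (Dx k1))) x t + Dx (Dx (Dx k2)) x t
              - 2 * k1 x t * Dx (Dx k1) x t - (Dx k1 x t)^2
              - 2 * k1 x t * Dx k2 x t + (4/9) * (k1 x t)^3 + 2 * (k2 x t)^2) x t
       = vector_derivative (\<lambda>s. (2/3) * Dx (Dx (Dx (Dx k1))) s t + Dx (Dx (Dx k2)) s t
              - 2 * k1 s t * Dx (Dx k1) s t - (Dx k1 s t)^2
              - 2 * k1 s t * Dx k2 s t + (4/9) * (k1 s t)^3 + 2 * (k2 s t)^2) (at x)"
      by (rule Dx_def)
    also have "\<dots> = vector_derivative (\<lambda>s. ((2/3) * A 4 s + B 3 s - 2 * A 0 s * A 2 s - 2 * A 0 s * B 1 s - A 1 s * A 1 s + 2 * B 0 s * B 0 s + (4/9) * A 0 s * A 0 s * A 0 s)) (at x)" by (simp only: e)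
    also have "\<dots> = ((2/3) * A 5 x + B 4 x - 2 * A 0 x * A 3 x - 2 * A 0 x * B 2 x - 4 * A 1 x * A 2 x - 2 * A 1 x * B 1 x + 4 * B 0 x * B 1 x + (4/3) * A 0 x * A 0 x * A 1 x)"
    proof (rule vector_derivative_at)
      show "((\<lambda>s. ((2/3) * A 4 s + B 3 s - 2 * A 0 s * A 2 s - 2 * A 0 s * B 1 s - A 1 s * A 1 s + 2 * B 0 s * B 0 s + (4/9) * A 0 s * A 0 s * A 0 s)) has_vector_derivative ((2/3) * A 5 x + B 4 x - 2 * A 0 x * A 3 x - 2 * A 0 x * B 2 x - 4 * A 1 x * A 2 x - 2 * A 1 x * B 1 x + 4 * B 0 x * B 1 x + (4/3) * A 0 x * A 0 x * A 1 x)) (at x)"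
        unfolding has_real_derivative_iff_has_vector_derivative[symmetric]
        by (auto intro!: derivative_eq_intros dA dB simp: eval_nat_numeral field_simps)
    qed
    finally show ?thesis .
  qed
  have "Dt k2 x t = (- (1/3) * A 5 x - B 4 x - (1/3) * A 0 x * A 3 x + A 0 x * B 2 x + (5/3) * A 1 x * A 2 x + 5 * A 1 x * B 1 x + (11/3) * A 2 x * B 0 x + 3 * B 0 x * B 1 x + (1/3) * A 0 x * A 0 x * A 1 x + (1/3) * A 0 x * A 0 x * B 0 x) - (A 1 x + B 0 x) * (- (1/3) * A 2 x - B 1 x - (2/3) * A 0 x * A 0 x) - A 0 x * (- (1/3) * A 3 x - B 2 x - (1/3) * A 0 x * A 1 x + A 0 x * B 0 x) - (- A 5 x - 2 * B 4 x + 2 * A 0 x * A 3 x + 4 * A 0 x * B 2 x + 6 * A 1 x * A 2 x + 8 * A 1 x * B 1 x + 4 * A 2 x * B 0 x)"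
    using key[of x] MK DK1 by linarith
  also have "\<dots> = ((2/3) * A 5 x + B 4 x - 2 * A 0 x * A 3 x - 2 * A 0 x * B 2 x - 4 * A 1 x * A 2 x - 2 * A 1 x * B 1 x + 4 * B 0 x * B 1 x + (4/3) * A 0 x * A 0 x * A 1 x)" by (simp add: field_simps)
  finally show ?thesis using RHS by simp
qed

lemma diffx:
  assumes "smooth2 T f" "t \<in> T"
  shows "(\<lambda>s. f s t) differentiable (at x)"
  by (rule differentiableI_vector[OF hasDx[OF assms]])

lemma per_Dx:
  fixes f :: "real \<Rightarrow> real \<Rightarrow> 'a::real_normed_vector"
  assumes "smooth2 T f" "t \<in> T" "\<And>s. f (s + L) t = f s t"
  shows "Dx f (s + L) t = Dx f s t"
proof -
  have d: "((\<lambda>s. f s t) \<circ> (\<lambda>s. s + L) has_vector_derivative (1 *\<^sub>R Dx f (s + L) t)) (at s)"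
  proof -
    have h1: "((\<lambda>s. s + L) has_vector_derivative 1) (at s)"
      unfolding has_real_derivative_iff_has_vector_derivative[symmetric] by (auto intro!: derivative_eq_intros)
    show ?thesis using vector_diff_chain_at[OF h1 hasDx[OF assms(1,2), of "s + L"]] by simp
  qed
  have e: "(\<lambda>s. f s t) \<circ> (\<lambda>s. s + L) = (\<lambda>s. f s t)" using assms(3) by (auto simp: o_def)
  have "Dx f s t = vector_derivative (\<lambda>s. f s t) (at s)" by (rule Dx_def)
  also have "\<dots> = Dx f (s + L) t" using vector_derivative_at[OF d] unfolding e by simp
  finally show ?thesis by simp
qed

theorem mainTheorem5:
  fixes \<gamma> :: "real \<Rightarrow> real \<Rightarrow> real ^ 3"
    and k1 k2 :: "real \<Rightarrow> real \<Rightarrow> real"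
    and T :: "real set"
  assumes T: "open T" "is_interval T"
    and smooth: "smooth2 T \<gamma>" "smooth2 T k1" "smooth2 T k2"
    and arclength: "\<And>x t. t \<in> T \<Longrightarrow>
        det (vector [\<gamma> x t, Dx \<gamma> x t, Dx (Dx \<gamma>) x t] :: real ^ 3 ^ 3) = 1"
    and invariants: "\<And>x t. t \<in> T \<Longrightarrow>
        Dx (Dx (Dx \<gamma>)) x t
          = Dx (\<lambda>x t. k1 x t *\<^sub>R \<gamma> x t) x t + k2 x t *\<^sub>R \<gamma> x t"
    and flow: "\<And>x t. t \<in> T \<Longrightarrow>
        Dt \<gamma> x t = k1 x t *\<^sub>R Dx (Dx \<gamma>) x t + k2 x t *\<^sub>R Dx \<gamma> x t
          - (Dx k2 x t + (1/3) * (Dx (Dx k1) x t + 2 * (k1 x t)^2)) *\<^sub>R \<gamma> x t"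
  shows "(\<forall>x t. t \<in> T \<longrightarrow>
            Dt k2 x t = Dx (\<lambda>x t.
                (2/3) * Dx (Dx (Dx (Dx k1))) x t + Dx (Dx (Dx k2)) x t
              - 2 * k1 x t * Dx (Dx k1) x t - (Dx k1 x t)^2
              - 2 * k1 x t * Dx k2 x t + (4/9) * (k1 x t)^3 + 2 * (k2 x t)^2) x t)
       \<and> (\<forall>L. L > 0 \<longrightarrow> (\<forall>x t. t \<in> T \<longrightarrow> \<gamma> (x + L) t = \<gamma> x t) \<longrightarrow>
            (\<forall>t1\<in>T. \<forall>t2\<in>T. integral {0..L} (\<lambda>x. k2 x t1) = integral {0..L} (\<lambda>x. k2 x t2)))"
proof -
  note sg = smooth(1) and sk1 = smooth(2) and sk2 = smooth(3)
  have g3eq: "Dx (Dx (Dx \<gamma>)) x t = (Dx k1 x t + k2 x t) *\<^sub>R \<gamma> x t + k1 x t *\<^sub>R Dx \<gamma> x t"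
    if t: "t \<in> T" for x t
  proof -
    have hk: "((\<lambda>s. k1 s t) has_real_derivative Dx k1 x t) (at x)"
      using hasDx[OF sk1 t] by (simp add: has_real_derivative_iff_has_vector_derivative)
    have "Dx (\<lambda>x t. k1 x t *\<^sub>R \<gamma> x t) x t = vector_derivative (\<lambda>s. k1 s t *\<^sub>R \<gamma> s t) (at x)"
      by (rule Dx_def)
    also have "\<dots> = k1 x t *\<^sub>R Dx \<gamma> x t + Dx k1 x t *\<^sub>R \<gamma> x t"
      by (rule vector_derivative_at[OF has_vector_derivative_scaleR[OF hk hasDx[OF sg t]]])
    finally show ?thesis using invariants[OF t, of x] by (simp add: algebra_simps)
  qed
  have P1: "\<forall>x t. t \<in> T \<longrightarrow>
            Dt k2 x t = Dx (\<lambda>x t.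
                (2/3) * Dx (Dx (Dx (Dx k1))) x t + Dx (Dx (Dx k2)) x t
              - 2 * k1 x t * Dx (Dx k1) x t - (Dx k1 x t)^2
              - 2 * k1 x t * Dx k2 x t + (4/9) * (k1 x t)^3 + 2 * (k2 x t)^2) x t"
    using part1[OF T sg sk1 sk2 arclength g3eq flow] by blast
  show ?thesis
  proof (rule conjI[OF P1], intro allI impI ballI)
    fix L :: real and t1 t2
    assume Lpos: "L > 0" and per: "\<forall>x t. t \<in> T \<longrightarrow> \<gamma> (x + L) t = \<gamma> x t"
      and t1: "t1 \<in> T" and t2: "t2 \<in> T"
    have perk: "k1 (s + L) t = k1 s t \<and> k2 (s + L) t = k2 s t" if t: "t \<in> T" for s t
    proof -
      have p0: "\<gamma> (s + L) t = \<gamma> s t" for s using per t by blast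
      have p1: "Dx \<gamma> (s + L) t = Dx \<gamma> s t" for s by (rule per_Dx[where f="\<gamma>" and L=L, OF sg t p0])
      have p2: "Dx (Dx \<gamma>) (s + L) t = Dx (Dx \<gamma>) s t" for s by (rule per_Dx[where f="Dx \<gamma>" and L=L, OF smooth2_Dx[OF sg] t p1])
      have p3: "Dx (Dx (Dx \<gamma>)) (s + L) t = Dx (Dx (Dx \<gamma>)) s t" for s
        by (rule per_Dx[where f="Dx (Dx \<gamma>)" and L=L, OF smooth2_Dx[OF smooth2_Dx[OF sg]] t p2])
      have c: "(Dx k1 u t + k2 u t = Dx k1 (u + L) t + k2 (u + L) t) \<and> k1 u t = k1 (u + L) t" for u
      proof -
        have "(Dx k1 (u + L) t + k2 (u + L) t) *\<^sub>R \<gamma> u t + k1 (u + L) t *\<^sub>R Dx \<gamma> u t + 0 *\<^sub>R Dx (Dx \<gamma>) u t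
            = (Dx k1 u t + k2 u t) *\<^sub>R \<gamma> u t + k1 u t *\<^sub>R Dx \<gamma> u t + 0 *\<^sub>R Dx (Dx \<gamma>) u t"
          using g3eq[OF t, of "u + L"] g3eq[OF t, of u] p0[of u] p1[of u] p3[of u] by simp
        from indep3[OF arclength[OF t] this] show ?thesis by simp
      qed
      have q1: "k1 (u + L) t = k1 u t" for u using conjunct2[OF c[of u]] by simp
      have q2: "Dx k1 (u + L) t = Dx k1 u t" for u by (rule per_Dx[where f="k1" and L=L, OF sk1 t q1])
      have "k2 (s + L) t = k2 s t" using c[of s] q2[of s] by linarith
      then show ?thesis using q1[of s] by simp
    qed
    define G where "G = (\<lambda>x t.
                (2/3) * Dx (Dx (Dx (Dx k1))) x t + Dx (Dx (Dx k2)) x t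
              - 2 * k1 x t * Dx (Dx k1) x t - (Dx k1 x t)^2
              - 2 * k1 x t * Dx k2 x t + (4/9) * (k1 x t)^3 + 2 * (k2 x t)^2)"
    have P1': "Dt k2 x t = Dx G x t" if "t \<in> T" for x t using P1 that unfolding G_def by blast
    have Gper: "G L t = G 0 t" if t: "t \<in> T" for t
    proof -
      have a0: "k1 (s + L) t = k1 s t" for s using perk[OF t] by blast
      have b0: "k2 (s + L) t = k2 s t" for s using perk[OF t] by blast
      have a1: "Dx k1 (s + L) t = Dx k1 s t" for s by (rule per_Dx[where f="k1" and L=L, OF sk1 t a0])
      have a2: "Dx (Dx k1) (s + L) t = Dx (Dx k1) s t" for s by (rule per_Dx[where f="Dx k1" and L=L, OF smooth2_Dx[OF sk1] t a1])
      have a3: "Dx (Dx (Dx k1)) (s + L) t = Dx (Dx (Dx k1)) s t" for s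
        by (rule per_Dx[where f="Dx (Dx k1)" and L=L, OF smooth2_Dx[OF smooth2_Dx[OF sk1]] t a2])
      have a4: "Dx (Dx (Dx (Dx k1))) (s + L) t = Dx (Dx (Dx (Dx k1))) s t" for s
        by (rule per_Dx[where f="Dx (Dx (Dx k1))" and L=L, OF smooth2_Dx[OF smooth2_Dx[OF smooth2_Dx[OF sk1]]] t a3])
      have b1: "Dx k2 (s + L) t = Dx k2 s t" for s by (rule per_Dx[where f="k2" and L=L, OF sk2 t b0])
      have b2: "Dx (Dx k2) (s + L) t = Dx (Dx k2) s t" for s by (rule per_Dx[where f="Dx k2" and L=L, OF smooth2_Dx[OF sk2] t b1])
      have b3: "Dx (Dx (Dx k2)) (s + L) t = Dx (Dx (Dx k2)) s t" for s
        by (rule per_Dx[where f="Dx (Dx k2)" and L=L, OF smooth2_Dx[OF smooth2_Dx[OF sk2]] t b2])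
      show ?thesis using a0[of 0] a1[of 0] a2[of 0] a4[of 0] b0[of 0] b1[of 0] b3[of 0]
        unfolding G_def by simp
    qed
    have Ider: "((\<lambda>t. integral (cbox 0 L) (\<lambda>x. k2 x t)) has_vector_derivative 0) (at t within T)"
      if t: "t \<in> T" for t
    proof -
      have cvT: "convex T" using T(2) is_interval_convex by blast
      have Lb: "((\<lambda>t. integral (cbox 0 L) (\<lambda>u. k2 u t)) has_vector_derivative
               integral (cbox 0 L) (\<lambda>u. Dt k2 u t)) (at t within T)"
      proof (rule leibniz_rule_vector_derivative[where f="\<lambda>t u. k2 u t" and fx="\<lambda>t u. Dt k2 u t"])
        show "((\<lambda>x. k2 s x) has_vector_derivative Dt k2 s x) (at x within T)" if "x \<in> T" "s \<in> cbox 0 L" for x s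
          using hasDt[OF sk2 that(1)] by (rule has_vector_derivative_at_within)
        show "(\<lambda>u. k2 u x) integrable_on cbox 0 L" if "x \<in> T" for x
          unfolding cbox_interval by (intro integrable_continuous_interval contx[OF sk2 that])
        show "continuous_on (T \<times> cbox 0 L) (\<lambda>(x, t). Dt k2 t x)"
          by (rule cont_swap[OF smooth2_Dt[OF sk2]]) simp
        show "t \<in> T" by (rule t)
        show "convex T" by (rule cvT)
      qed
      have GD: "((\<lambda>s. G s t) has_vector_derivative Dx G x t) (at x)" for x
      proof -
        have "(\<lambda>s. G s t) differentiable (at x)"
          unfolding G_def
          by (intro derivative_intros diffx[OF sk1 t] diffx[OF sk2 t] diffx[OF smooth2_Dx[OF sk1] t]
              diffx[OF smooth2_Dx[OF sk2] t] diffx[OF smooth2_Dx[OF smooth2_Dx[OF sk1]] t]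
              diffx[OF smooth2_Dx[OF smooth2_Dx[OF smooth2_Dx[OF sk2]]] t]
              diffx[OF smooth2_Dx[OF smooth2_Dx[OF smooth2_Dx[OF smooth2_Dx[OF sk1]]]] t])
        then show ?thesis unfolding Dx_def by (simp add: vector_derivative_works[symmetric])
      qed
      have "((\<lambda>u. Dx G u t) has_integral (G L t - G 0 t)) {0..L}"
        using Lpos by (intro fundamental_theorem_of_calculus) (auto intro: has_vector_derivative_at_within[OF GD])
      then have "((\<lambda>u. Dt k2 u t) has_integral 0) {0..L}" using Gper[OF t] P1'[OF t] by simp
      then have "integral (cbox 0 L) (\<lambda>u. Dt k2 u t) = 0" unfolding cbox_interval by (rule integral_unique)
      then show ?thesis using Lb by simp
    qed
    have "\<exists>c. \<forall>t\<in>T. integral (cbox 0 L) (\<lambda>x. k2 x t) = c"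
    proof (rule has_derivative_zero_constant)
      show "convex T" using T(2) is_interval_convex by blast
      fix t assume "t \<in> T"
      from Ider[OF this] show "((\<lambda>t. integral (cbox 0 L) (\<lambda>x. k2 x t)) has_derivative (\<lambda>h. 0)) (at t within T)"
        by (simp add: has_vector_derivative_def)
    qed
    then obtain c where "\<forall>t\<in>T. integral (cbox 0 L) (\<lambda>x. k2 x t) = c" by blast
    then show "integral {0..L} (\<lambda>x. k2 x t1) = integral {0..L} (\<lambda>x. k2 x t2)"
      using t1 t2 unfolding cbox_interval by simp
  qed
qed


end
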